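(* Let $T$ be a finite abelian group, written multiplicatively, and let $F: T\times T\to \{z\in\mathbb{C}: |z|=1\}$ be a map satisfying, for all $K,K_1,K_2,L,L_1,L_2\in T$, $$F(K_1K_2,L)=F(K_1,L)F(K_2,L),\qquad F(K,L_1L_2)=F(K,L_1)F(K,L_2),\qquad F(K,L)=\overline{F(L,K)}.$$ Let $\mathcal{S}$ be a subgroup of $T$ and let $\mathcal{U}=\{J\in\mathcal{S} : F(K,J)=1 \text{ for all } K\in\mathcal{S}\}$. Suppose $X\in T$ satisfies $F(X,K)=1$ for all $K\in\mathcal{U}$. Then there exists $R\in X\mathcal{S}$ such that $F(R,K)=1$ for all $K\in\mathcal{S}$, and such an element $R$ is unique up to multiplication by elements of $\mathcal{U}$.
   Context: This is the group-theoretic content of the statement that untwisted orbit representatives exist: here $T$ plays the role of the group of simple currents fixing a given primary field $a$, $F(K,L)=F(a,K,L)$ is the simple current twist on $a$, $\mathcal{S}$ is the stabilizer of $a$ in the extension group, $\mathcal{U}$ is the untwisted stabilizer, and $X$ is a representative (fixing $a$) of a coset of the extension group. *)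

theory Defs
  imports Complex_Main "HOL-Algebra.Algebra"
begin

end

theory Submission
  imports Defs
begin

lemma char_sum_zero:
  fixes G (structure) and \<chi> :: "'a \<Rightarrow> complex"
  assumes "group G" "subgroup S G"
   "\<And>a b. a \<in> S \<Longrightarrow> b \<in> S \<Longrightarrow> \<chi> (a \<otimes> b) = \<chi> a * \<chi> b"
   "K0 \<in> S" "\<chi> K0 \<noteq> 1"
  shows "(\<Sum>K\<in>S. \<chi> K) = 0"
proof -
  interpret group G by fact
  have sub: "S \<subseteq> carrier G" using assms(2) subgroup.subset by blast
  have K0: "K0 \<in> carrier G" using sub assms(4) by blast
  have inj: "inj_on (\<lambda>K. K0 \<otimes> K) S"
  proof (rule inj_onI)
    fix x y assume "x \<in> S" "y \<in> S" "K0 \<otimes> x = K0 \<otimes> y"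
    then show "x = y" using K0 sub l_cancel by blast
  qed
  have img: "(\<lambda>K. K0 \<otimes> K) ` S = S"
  proof
    show "(\<lambda>K. K0 \<otimes> K) ` S \<subseteq> S"
      using assms(2,4) subgroup.m_closed by (auto intro: subgroup.m_closed)
    show "S \<subseteq> (\<lambda>K. K0 \<otimes> K) ` S"
    proof
      fix x assume x: "x \<in> S"
      have xc: "x \<in> carrier G" using x sub by blast
      have "x = K0 \<otimes> (inv K0 \<otimes> x)" using K0 xc
        by (simp add: m_assoc[symmetric])
      moreover have "inv K0 \<otimes> x \<in> S"
        using assms(2,4) x by (auto intro: subgroup.m_closed subgroup.m_inv_closed)
      ultimately show "x \<in> (\<lambda>K. K0 \<otimes> K) ` S" by blast
    qed
  qed
  have "(\<Sum>K\<in>S. \<chi> K) = sum \<chi> ((\<lambda>K. K0 \<otimes> K) ` S)" using img by simp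
  also have "\<dots> = (\<Sum>K\<in>S. \<chi> (K0 \<otimes> K))" using sum.reindex[OF inj] by (simp add: comp_def)
  also have "\<dots> = (\<Sum>K\<in>S. \<chi> K0 * \<chi> K)"
    by (rule sum.cong) (auto simp: assms(3,4))
  also have "\<dots> = \<chi> K0 * (\<Sum>K\<in>S. \<chi> K)" by (simp add: sum_distrib_left)
  finally have "(1 - \<chi> K0) * (\<Sum>K\<in>S. \<chi> K) = 0" by (simp add: algebra_simps)
  with assms(5) show ?thesis by simp
qed

theorem mainTheorem1:
  fixes G (structure)
    and F :: "'a \<Rightarrow> 'a \<Rightarrow> complex"
    and S U :: "'a set" and X0 :: "'a"
  assumes "comm_group G"
    and "finite (carrier G)"
    and "\<And>K L. K \<in> carrier G \<Longrightarrow> L \<in> carrier G \<Longrightarrow> cmod (F K L) = 1"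
    and "\<And>K1 K2 L. K1 \<in> carrier G \<Longrightarrow> K2 \<in> carrier G \<Longrightarrow> L \<in> carrier G \<Longrightarrow>
           F (K1 \<otimes>\<^bsub>G\<^esub> K2) L = F K1 L * F K2 L"
    and "\<And>K L1 L2. K \<in> carrier G \<Longrightarrow> L1 \<in> carrier G \<Longrightarrow> L2 \<in> carrier G \<Longrightarrow>
           F K (L1 \<otimes>\<^bsub>G\<^esub> L2) = F K L1 * F K L2"
    and "\<And>K L. K \<in> carrier G \<Longrightarrow> L \<in> carrier G \<Longrightarrow> F K L = cnj (F L K)"
    and "subgroup S G"
    and "U = {J \<in> S. \<forall>K \<in> S. F K J = 1}"
    and "X0 \<in> carrier G"
    and "\<forall>K \<in> U. F X0 K = 1"
  shows "\<exists>R. R \<in> l_coset G X0 S \<and> (\<forall>K \<in> S. F R K = 1) \<and>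
           (\<forall>R'. (R' \<in> l_coset G X0 S \<and> (\<forall>K \<in> S. F R' K = 1)) \<longleftrightarrow> R' \<in> l_coset G R U)"
proof -
  interpret comm_group G by fact
  have sub: "S \<subseteq> carrier G" using assms(7) subgroup.subset by blast
  have finS: "finite S" using sub assms(2) finite_subset by blast
  have oneS: "\<one> \<in> S" using assms(7) by (rule subgroup.one_closed)
  have nz: "F a b \<noteq> 0" if "a \<in> carrier G" "b \<in> carrier G" for a b
    using assms(3)[OF that] by auto
  have F1: "F \<one> b = 1" if "b \<in> carrier G" for b
  proof -
    have "F \<one> b = F \<one> b * F \<one> b" using assms(4)[of \<one> \<one> b] that by simp
    thus ?thesis using nz[of \<one> b] that by simp
  qed
  have F1': "F a \<one> = 1" if "a \<in> carrier G" for a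
    using F1 assms(6) that by (metis complex_cnj_one one_closed)
  have Finv: "F (inv a) b * F a b = 1" if "a \<in> carrier G" "b \<in> carrier G" for a b
    using assms(4)[of "inv a" a b] that F1 by simp
  have ex: "\<exists>s\<in>S. \<forall>K\<in>S. F s K * F X0 K = 1"
  proof (rule ccontr)
    assume no: "\<not> (\<exists>s\<in>S. \<forall>K\<in>S. F s K * F X0 K = 1)"
    have grp: "group G" by (rule is_group)
    define c where "c s = (\<Sum>K\<in>S. F s K * F X0 K)" for s
    have c0: "c s = 0" if s: "s \<in> S" for s
    proof -
      obtain K0 where K0: "K0 \<in> S" "F s K0 * F X0 K0 \<noteq> 1" using no s by blast
      have sc: "s \<in> carrier G" using s sub by blast
      have mult: "F s (a \<otimes> b) * F X0 (a \<otimes> b) = (F s a * F X0 a) * (F s b * F X0 b)"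
        if "a \<in> S" "b \<in> S" for a b
        using assms(5)[OF sc, of a b] assms(5)[OF assms(9), of a b] that sub
        by (auto simp: subsetD)
      show ?thesis unfolding c_def
        by (rule char_sum_zero[where G=G and S=S, OF grp assms(7) mult K0])
    qed
    have e1: "(\<Sum>s\<in>S. c s) = 0" using c0 by simp
    have e2: "(\<Sum>s\<in>S. c s) = (\<Sum>K\<in>S. F X0 K * (\<Sum>s\<in>S. F s K))"
      unfolding c_def sum_distrib_left by (subst sum.swap) (simp add: mult.commute)
    have e3: "(\<Sum>s\<in>S. F s K) = (if K \<in> U then of_nat (card S) else 0)" if K: "K \<in> S" for K
    proof (cases "K \<in> U")
      case True
      then have "\<forall>s\<in>S. F s K = 1" using assms(8) by blast
      then have "(\<Sum>s\<in>S. F s K) = (\<Sum>s\<in>S. 1)" by simp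
      then show ?thesis using True by simp
    next
      case False
      then obtain s0 where s0: "s0 \<in> S" "F s0 K \<noteq> 1" using assms(8) K by blast
      have Kc: "K \<in> carrier G" using K sub by blast
      have mult: "F (a \<otimes> b) K = F a K * F b K" if "a \<in> S" "b \<in> S" for a b
        using assms(4)[of a b K] that sub Kc by (auto simp: subsetD)
      have "(\<Sum>s\<in>S. F s K) = 0"
        by (rule char_sum_zero[where G=G and S=S, OF grp assms(7) mult s0])
      then show ?thesis using False by simp
    qed
    have e4: "(\<Sum>K\<in>S. F X0 K * (\<Sum>s\<in>S. F s K)) = (\<Sum>K\<in>S. if K \<in> U then of_nat (card S) else 0)"
    proof (rule sum.cong)
      fix K assume K: "K \<in> S"
      show "F X0 K * (\<Sum>s\<in>S. F s K) = (if K \<in> U then of_nat (card S) else 0)"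
        using e3[OF K] assms(10) by simp
    qed simp
    have US: "U \<subseteq> S" using assms(8) by blast
    have e5: "(\<Sum>K\<in>S. if K \<in> U then (of_nat (card S)::complex) else 0) = (\<Sum>K\<in>U. of_nat (card S))"
    proof -
      have "(\<Sum>K\<in>S. if K \<in> U then (of_nat (card S)::complex) else 0) = (\<Sum>K\<in>S \<inter> U. of_nat (card S))"
        by (rule sum.inter_restrict[symmetric]) (rule finS)
      also have "S \<inter> U = U" using US by blast
      finally show ?thesis .
    qed
    have oneU: "\<one> \<in> U" using assms(8) oneS F1' sub by auto
    have finU: "finite U" using finS US finite_subset by blast
    have cU: "card U > 0" using finU oneU card_gt_0_iff by blast
    have cS: "card S > 0" using finS oneS card_gt_0_iff by blast
    have "(\<Sum>K\<in>U. (of_nat (card S) :: complex)) \<noteq> 0" using cU cS by simp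
    with e1 e2 e4 e5 show False by simp
  qed
  then obtain s where s: "s \<in> S" "\<forall>K\<in>S. F s K * F X0 K = 1" by blast
  define R where "R = X0 \<otimes> s"
  have sc: "s \<in> carrier G" using s sub by blast
  have Rc: "R \<in> carrier G" using R_def sc assms(9) by simp
  have memc: "x \<in> l_coset G a H \<longleftrightarrow> (\<exists>h\<in>H. x = a \<otimes> h)" for x a H
    unfolding l_coset_def by blast
  have RS: "R \<in> l_coset G X0 S" using memc R_def s by blast
  have RF: "\<forall>K\<in>S. F R K = 1"
  proof
    fix K assume K: "K \<in> S"
    have Kc: "K \<in> carrier G" using K sub by blast
    show "F R K = 1" using assms(4)[OF assms(9) sc Kc] s(2) K unfolding R_def by (simp add: mult.commute)
  qed
  show ?thesis
  proof (intro exI conjI allI iffI)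
    show "R \<in> l_coset G X0 S" by fact
    show "\<forall>K\<in>S. F R K = 1" by fact
  next
    fix R' assume A: "R' \<in> l_coset G X0 S \<and> (\<forall>K\<in>S. F R' K = 1)"
    then obtain s' where s': "s' \<in> S" "R' = X0 \<otimes> s'" using memc by blast
    have s'c: "s' \<in> carrier G" using s' sub by blast
    define u where "u = inv s \<otimes> s'"
    have uS: "u \<in> S" using u_def s s' assms(7) by (auto intro: subgroup.m_closed subgroup.m_inv_closed)
    have uc: "u \<in> carrier G" using uS sub by blast
    have ss: "s \<otimes> (inv s \<otimes> s') = s'" using sc s'c by (simp add: m_assoc[symmetric])
    have R'eq: "R' = R \<otimes> u" using s' ss unfolding R_def u_def
      using sc s'c assms(9) by (simp add: m_assoc)
    have "F u K = 1" if K: "K \<in> S" for K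
    proof -
      have Kc: "K \<in> carrier G" using K sub by blast
      have "F R' K = F R K * F u K" using R'eq assms(4)[OF Rc uc Kc] by simp
      thus ?thesis using A RF K by simp
    qed
    hence "F K u = 1" if "K \<in> S" for K using assms(6)[of K u] that sub uc by (simp add: subsetD)
    hence "u \<in> U" using assms(8) uS by blast
    thus "R' \<in> l_coset G R U" using memc R'eq by blast
  next
    fix R' assume A: "R' \<in> l_coset G R U"
    then obtain u where u: "u \<in> U" "R' = R \<otimes> u" using memc by blast
    have uS: "u \<in> S" using u assms(8) by blast
    have uc: "u \<in> carrier G" using uS sub by blast
    have "R' = X0 \<otimes> (s \<otimes> u)" using u R_def sc uc assms(9) by (simp add: m_assoc)
    moreover have "s \<otimes> u \<in> S" using s uS assms(7) by (auto intro: subgroup.m_closed)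
    ultimately have "R' \<in> l_coset G X0 S" using memc by blast
    moreover have "F R' K = 1" if K: "K \<in> S" for K
    proof -
      have Kc: "K \<in> carrier G" using K sub by blast
      have "F u K = cnj (F K u)" by (rule assms(6)[OF uc Kc])
      also have "\<dots> = 1" using u(1) assms(8) K by simp
      finally have "F u K = 1" .
      thus ?thesis using u(2) assms(4)[OF Rc uc Kc] RF K by simp
    qed
    ultimately show "R' \<in> l_coset G X0 S" "\<forall>K\<in>S. F R' K = 1" by blast+
  qed
qed

end
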